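(* Let $m\ge 1$. The Lie superalgebra $H_m$ is capable if and only if $m=1$.
   Context: All algebras are over a field $\mathbb{F}$ of characteristic $\neq 2,3$. $H_m$ is the Lie superalgebra with even basis $x_1,\dots,x_m$, odd basis $y_1,\dots,y_m,z$, and nonzero brackets $[x_j,y_j]=z$ ($1\le j\le m$). A Lie superalgebra $L$ is capable if $L\cong H/Z(H)$ for some Lie superalgebra $H$. *)

theory Defs
  imports Main
begin

record ('f, 'a) lsa =
  carr :: "'a set"
  evp  :: "'a set"
  oddp :: "'a set"
  zr   :: 'a
  ad   :: "'a \<Rightarrow> 'a \<Rightarrow> 'a"
  sm   :: "'f \<Rightarrow> 'a \<Rightarrow> 'a"
  br   :: "'a \<Rightarrow> 'a \<Rightarrow> 'a"

definition vector_space_on :: "('f::field, 'a) lsa \<Rightarrow> bool" where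
  "vector_space_on L \<longleftrightarrow>
     zr L \<in> carr L \<and>
     (\<forall>x\<in>carr L. \<forall>y\<in>carr L. ad L x y \<in> carr L) \<and>
     (\<forall>c. \<forall>x\<in>carr L. sm L c x \<in> carr L) \<and>
     (\<forall>x\<in>carr L. \<forall>y\<in>carr L. \<forall>z\<in>carr L. ad L (ad L x y) z = ad L x (ad L y z)) \<and>
     (\<forall>x\<in>carr L. \<forall>y\<in>carr L. ad L x y = ad L y x) \<and>
     (\<forall>x\<in>carr L. ad L (zr L) x = x) \<and>
     (\<forall>x\<in>carr L. \<exists>y\<in>carr L. ad L x y = zr L) \<and>
     (\<forall>c. \<forall>x\<in>carr L. \<forall>y\<in>carr L. sm L c (ad L x y) = ad L (sm L c x) (sm L c y)) \<and>
     (\<forall>c d. \<forall>x\<in>carr L. sm L (c + d) x = ad L (sm L c x) (sm L d x)) \<and>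
     (\<forall>c d. \<forall>x\<in>carr L. sm L (c * d) x = sm L c (sm L d x)) \<and>
     (\<forall>x\<in>carr L. sm L 1 x = x)"

definition subspace_of :: "'a set \<Rightarrow> ('f::field, 'a) lsa \<Rightarrow> bool" where
  "subspace_of S L \<longleftrightarrow> S \<subseteq> carr L \<and> zr L \<in> S \<and>
     (\<forall>x\<in>S. \<forall>y\<in>S. ad L x y \<in> S) \<and> (\<forall>c. \<forall>x\<in>S. sm L c x \<in> S)"

definition hom :: "('f, 'a) lsa \<Rightarrow> 'a \<Rightarrow> bool \<Rightarrow> bool" where
  "hom L x d \<longleftrightarrow> (if d then x \<in> oddp L else x \<in> evp L)"

text \<open>The sign (-1)^(|x||y|).\<close>
definition sgn2 :: "bool \<Rightarrow> bool \<Rightarrow> 'f::field" where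
  "sgn2 d e = (if d \<and> e then - 1 else 1)"

definition lie_superalgebra :: "('f::field, 'a) lsa \<Rightarrow> bool" where
  "lie_superalgebra L \<longleftrightarrow>
     vector_space_on L \<and>
     subspace_of (evp L) L \<and> subspace_of (oddp L) L \<and>
     carr L = {ad L a b | a b. a \<in> evp L \<and> b \<in> oddp L} \<and>
     evp L \<inter> oddp L = {zr L} \<and>
     (\<forall>x\<in>carr L. \<forall>y\<in>carr L. br L x y \<in> carr L) \<and>
     (\<forall>c. \<forall>x\<in>carr L. \<forall>y\<in>carr L. \<forall>z\<in>carr L.
        br L (ad L (sm L c x) y) z = ad L (sm L c (br L x z)) (br L y z) \<and>
        br L z (ad L (sm L c x) y) = ad L (sm L c (br L z x)) (br L z y)) \<and>
     (\<forall>x y d e. hom L x d \<longrightarrow> hom L y e \<longrightarrow> hom L (br L x y) (d \<noteq> e)) \<and>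
     (\<forall>x y d e. hom L x d \<longrightarrow> hom L y e \<longrightarrow>
        br L x y = sm L (- sgn2 d e) (br L y x)) \<and>
     (\<forall>x y z d e f. hom L x d \<longrightarrow> hom L y e \<longrightarrow> hom L z f \<longrightarrow>
        ad L (ad L (sm L (sgn2 d f) (br L x (br L y z)))
                   (sm L (sgn2 e d) (br L y (br L z x))))
             (sm L (sgn2 f e) (br L z (br L x y))) = zr L)"

definition center :: "('f, 'a) lsa \<Rightarrow> 'a set" where
  "center L = {z \<in> carr L. \<forall>x\<in>carr L. br L z x = zr L}"

definition coset :: "('f, 'a) lsa \<Rightarrow> 'a set \<Rightarrow> 'a \<Rightarrow> 'a set" where
  "coset L I x = {ad L x i | i. i \<in> I}"

definition quot :: "('f, 'a) lsa \<Rightarrow> 'a set \<Rightarrow> ('f, 'a set) lsa" where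
  "quot L I = \<lparr> carr = coset L I ` carr L,
               evp = coset L I ` evp L,
               oddp = coset L I ` oddp L,
               zr = I,
               ad = (\<lambda>A B. {ad L a b | a b. a \<in> A \<and> b \<in> B}),
               sm = (\<lambda>c A. {ad L (sm L c a) i | a i. a \<in> A \<and> i \<in> I}),
               br = (\<lambda>A B. {ad L (br L a b) i | a b i. a \<in> A \<and> b \<in> B \<and> i \<in> I}) \<rparr>"

definition lsa_iso :: "('f, 'a) lsa \<Rightarrow> ('f, 'b) lsa \<Rightarrow> ('a \<Rightarrow> 'b) \<Rightarrow> bool" where
  "lsa_iso L M f \<longleftrightarrow> bij_betw f (carr L) (carr M) \<and>
     f ` evp L = evp M \<and> f ` oddp L = oddp M \<and>
     (\<forall>x\<in>carr L. \<forall>y\<in>carr L. f (ad L x y) = ad M (f x) (f y) \<and>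
                            f (br L x y) = br M (f x) (f y)) \<and>
     (\<forall>c. \<forall>x\<in>carr L. f (sm L c x) = sm M c (f x))"

text \<open>L is capable (with the witness H living on carrier type 'h):
  L is isomorphic to H/Z(H) for some Lie superalgebra H.\<close>
definition capable_in :: "'h itself \<Rightarrow> ('f::field, 'a) lsa \<Rightarrow> bool" where
  "capable_in T L \<longleftrightarrow> (\<exists>(H :: ('f, 'h) lsa) f.
      lie_superalgebra H \<and> lsa_iso (quot H (center H)) L f)"

text \<open>The Heisenberg Lie superalgebra H_m: an element (a, b, c) stands for
  sum_j a_j x_j + sum_j b_j y_j + c z (j = 1..m); x_j even, y_j, z odd,
  with [x_j, y_j] = z (and hence [y_j, x_j] = -z), all other brackets of
  basis elements zero.\<close>
definition heis :: "nat \<Rightarrow> ('f::field, (nat \<Rightarrow> 'f) \<times> (nat \<Rightarrow> 'f) \<times> 'f) lsa" where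
  "heis m = \<lparr> carr = {(a, b, c). \<forall>j. (j < 1 \<or> m < j) \<longrightarrow> a j = 0 \<and> b j = 0},
              evp = {(a, b, c). (\<forall>j. (j < 1 \<or> m < j) \<longrightarrow> a j = 0) \<and> (\<forall>j. b j = 0) \<and> c = 0},
              oddp = {(a, b, c). (\<forall>j. a j = 0) \<and> (\<forall>j. (j < 1 \<or> m < j) \<longrightarrow> b j = 0)},
              zr = ((\<lambda>_. 0), (\<lambda>_. 0), 0),
              ad = (\<lambda>(a, b, c) (a', b', c'). ((\<lambda>j. a j + a' j), (\<lambda>j. b j + b' j), c + c')),
              sm = (\<lambda>k (a, b, c). ((\<lambda>j. k * a j), (\<lambda>j. k * b j), k * c)),
              br = (\<lambda>(a, b, c) (a', b', c').
                      ((\<lambda>_. 0), (\<lambda>_. 0), (\<Sum>j = 1..m. a j * b' j - b j * a' j))) \<rparr>"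

end

theory Submission
  imports Defs
begin



definition dl :: "nat \<Rightarrow> nat \<Rightarrow> 'f::field" where "dl k = (\<lambda>j. if j = k then 1 else 0)"

lemma sumdelta: assumes "1 \<le> a" "a \<le> m"
  shows "(\<Sum>j = 1..m. dl a j * dl b j) = (if a = b then (1::'f::field) else 0)"
proof -
  have "(\<Sum>j = 1..m. dl a j * dl b j) = (\<Sum>j = 1..m. if j = a then (if a = b then (1::'f) else 0) else 0)"
    by (rule sum.cong) (auto simp: dl_def)
  also have "\<dots> = (if a = b then 1 else 0)" using assms by (simp add: sum.delta)
  finally show ?thesis .
qed

lemma heis_ad: "ad (heis m) (a, b, c) (a', b', c') = ((\<lambda>j. a j + a' j), (\<lambda>j. b j + b' j), c + c')"
  by (simp add: heis_def)
lemma heis_sm: "sm (heis m) k (a, b, c) = ((\<lambda>j. k * a j), (\<lambda>j. k * b j), k * c)"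
  by (simp add: heis_def)
lemma heis_br: "br (heis m) (a, b, c) (a', b', c') = ((\<lambda>_. 0), (\<lambda>_. 0), (\<Sum>j = 1..m. a j * b' j - b j * a' j))"
  by (simp add: heis_def)
lemma heis_br_form: "\<exists>c. br (heis m) p q = ((\<lambda>_. 0), (\<lambda>_. 0), c)"
  by (cases p; cases q) (simp add: heis_def)

lemma dbl0: "(x::'f::field) = x + x \<Longrightarrow> x = 0"
  by (metis add_cancel_left_right)

locale LS =
  fixes L :: "('f::field, 'a) lsa"
  assumes lsa: "lie_superalgebra L"
begin

lemma vs: "vector_space_on L" using lsa unfolding lie_superalgebra_def by (elim conjE) meson

lemma zr_c[simp]: "zr L \<in> carr L" using vs unfolding vector_space_on_def by (elim conjE) meson
lemma add_c[simp]: "x \<in> carr L \<Longrightarrow> y \<in> carr L \<Longrightarrow> ad L x y \<in> carr L"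
  using vs unfolding vector_space_on_def by (elim conjE) meson
lemma sm_c[simp]: "x \<in> carr L \<Longrightarrow> sm L c x \<in> carr L"
  using vs unfolding vector_space_on_def by (elim conjE) meson
lemma assoc: "x \<in> carr L \<Longrightarrow> y \<in> carr L \<Longrightarrow> z \<in> carr L \<Longrightarrow> ad L (ad L x y) z = ad L x (ad L y z)"
  using vs unfolding vector_space_on_def by (elim conjE) meson
lemma comm: "x \<in> carr L \<Longrightarrow> y \<in> carr L \<Longrightarrow> ad L x y = ad L y x"
  using vs unfolding vector_space_on_def by (elim conjE) meson
lemma zero_l[simp]: "x \<in> carr L \<Longrightarrow> ad L (zr L) x = x"
  using vs unfolding vector_space_on_def by (elim conjE) meson
lemma inv_ex: "x \<in> carr L \<Longrightarrow> \<exists>y\<in>carr L. ad L x y = zr L"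
  using vs unfolding vector_space_on_def by (elim conjE) meson
lemma sm_add: "x \<in> carr L \<Longrightarrow> y \<in> carr L \<Longrightarrow> sm L c (ad L x y) = ad L (sm L c x) (sm L c y)"
  using vs unfolding vector_space_on_def by (elim conjE) meson
lemma sm_dist: "x \<in> carr L \<Longrightarrow> sm L (c + d) x = ad L (sm L c x) (sm L d x)"
  using vs unfolding vector_space_on_def by (elim conjE) meson
lemma sm_mult: "x \<in> carr L \<Longrightarrow> sm L (c * d) x = sm L c (sm L d x)"
  using vs unfolding vector_space_on_def by (elim conjE) meson
lemma sm_one[simp]: "x \<in> carr L \<Longrightarrow> sm L 1 x = x"
  using vs unfolding vector_space_on_def by (elim conjE) meson

lemma ssE: "subspace_of (evp L) L" and ssO: "subspace_of (oddp L) L"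
  using lsa unfolding lie_superalgebra_def by blast+
lemma E_c: "x \<in> evp L \<Longrightarrow> x \<in> carr L" using ssE unfolding subspace_of_def by blast
lemma O_c: "x \<in> oddp L \<Longrightarrow> x \<in> carr L" using ssO unfolding subspace_of_def by blast
lemma O_sm: "x \<in> oddp L \<Longrightarrow> sm L c x \<in> oddp L" using ssO unfolding subspace_of_def by blast
lemma E_sm: "x \<in> evp L \<Longrightarrow> sm L c x \<in> evp L" using ssE unfolding subspace_of_def by blast
lemma carr_eq: "carr L = {ad L a b |a b. a \<in> evp L \<and> b \<in> oddp L}"
  using lsa unfolding lie_superalgebra_def by (elim conjE) assumption
lemma EO_eq: "evp L \<inter> oddp L = {zr L}"
  using lsa unfolding lie_superalgebra_def by (elim conjE) assumption
lemma decomp: "x \<in> carr L \<Longrightarrow> \<exists>a b. a \<in> evp L \<and> b \<in> oddp L \<and> x = ad L a b"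
proof -
  assume "x \<in> carr L"
  then have "x \<in> {ad L a b |a b. a \<in> evp L \<and> b \<in> oddp L}" using carr_eq by simp
  then show ?thesis by blast
qed
lemma EO: "x \<in> evp L \<Longrightarrow> x \<in> oddp L \<Longrightarrow> x = zr L"
  using EO_eq by blast
lemma br_c[simp]: "x \<in> carr L \<Longrightarrow> y \<in> carr L \<Longrightarrow> br L x y \<in> carr L"
  using lsa unfolding lie_superalgebra_def by (elim conjE) meson
lemma bil1: "x \<in> carr L \<Longrightarrow> y \<in> carr L \<Longrightarrow> z \<in> carr L \<Longrightarrow>
   br L (ad L (sm L c x) y) z = ad L (sm L c (br L x z)) (br L y z)"
  using lsa unfolding lie_superalgebra_def by (elim conjE) meson
lemma bil2: "x \<in> carr L \<Longrightarrow> y \<in> carr L \<Longrightarrow> z \<in> carr L \<Longrightarrow>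
   br L z (ad L (sm L c x) y) = ad L (sm L c (br L z x)) (br L z y)"
  using lsa unfolding lie_superalgebra_def by (elim conjE) meson
lemma hom_br: "hom L x d \<Longrightarrow> hom L y e \<Longrightarrow> hom L (br L x y) (d \<noteq> e)"
  using lsa unfolding lie_superalgebra_def by (elim conjE) meson
lemma skew: "hom L x d \<Longrightarrow> hom L y e \<Longrightarrow> br L x y = sm L (- sgn2 d e) (br L y x)"
  using lsa unfolding lie_superalgebra_def by (elim conjE) meson
lemma jac: "hom L x d \<Longrightarrow> hom L y e \<Longrightarrow> hom L z f \<Longrightarrow>
   ad L (ad L (sm L (sgn2 d f) (br L x (br L y z))) (sm L (sgn2 e d) (br L y (br L z x))))
        (sm L (sgn2 f e) (br L z (br L x y))) = zr L"
  using lsa unfolding lie_superalgebra_def by (elim conjE) meson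

lemma hom_c: "hom L x d \<Longrightarrow> x \<in> carr L"
  unfolding hom_def by (cases d) (auto intro: E_c O_c)

lemma zero_r[simp]: "x \<in> carr L \<Longrightarrow> ad L x (zr L) = x"
  by (metis comm zero_l zr_c)

lemma cancel: assumes "a \<in> carr L" "b \<in> carr L" "c \<in> carr L" "ad L a b = ad L a c" shows "b = c"
proof -
  obtain n where n: "n \<in> carr L" "ad L a n = zr L" using inv_ex assms(1) by blast
  have "b = ad L (ad L n a) b" using n assms by (simp add: comm)
  also have "\<dots> = ad L n (ad L a b)" using n assms by (simp add: assoc)
  also have "\<dots> = ad L n (ad L a c)" using assms by simp
  also have "\<dots> = ad L (ad L n a) c" using n assms by (simp add: assoc)
  also have "\<dots> = c" using n assms by (simp add: comm)
  finally show ?thesis .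
qed

lemma idem: "a \<in> carr L \<Longrightarrow> ad L a a = a \<Longrightarrow> a = zr L"
  by (rule cancel[of a]) auto

lemma sm_zero[simp]: "sm L c (zr L) = zr L"
proof -
  have "sm L c (zr L) = sm L c (ad L (zr L) (zr L))" by simp
  also have "\<dots> = ad L (sm L c (zr L)) (sm L c (zr L))" by (rule sm_add) auto
  finally show ?thesis by (intro idem) auto
qed

lemma sm_0[simp]: "x \<in> carr L \<Longrightarrow> sm L 0 x = zr L"
proof -
  assume x: "x \<in> carr L"
  have "sm L 0 x = sm L (0 + 0) x" by simp
  also have "\<dots> = ad L (sm L 0 x) (sm L 0 x)" by (rule sm_dist[OF x])
  finally show ?thesis using x by (intro idem) auto
qed

lemma neg: assumes x: "x \<in> carr L" shows "ad L x (sm L (- 1) x) = zr L"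
proof -
  have "ad L x (sm L (- 1) x) = ad L (sm L 1 x) (sm L (- 1) x)" using x by simp
  also have "\<dots> = sm L (1 + - 1) x" using x by (simp only: sm_dist)
  also have "\<dots> = zr L" using x by simp
  finally show ?thesis .
qed

lemma neg_unique: assumes "a \<in> carr L" "b \<in> carr L" "ad L a b = zr L" shows "a = sm L (- 1) b"
proof -
  have "a = ad L a (ad L b (sm L (- 1) b))" using assms by (simp add: neg)
  also have "\<dots> = ad L (ad L a b) (sm L (- 1) b)" by (rule assoc[symmetric]) (simp_all add: assms)
  also have "\<dots> = sm L (- 1) b" using assms by simp
  finally show ?thesis .
qed

lemma parity: assumes "a \<in> evp L" "b \<in> oddp L" "ad L a b = zr L" shows "a = zr L" "b = zr L"
proof -
  have "a = sm L (- 1) b" using assms by (intro neg_unique) (auto intro: E_c O_c)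
  then have "a \<in> oddp L" using O_sm assms by simp
  then show a0: "a = zr L" using EO assms by blast
  show "b = zr L" using assms a0 by (simp add: O_c)
qed

lemma sm_eq0: assumes "s * s = 1" "x \<in> carr L" "sm L s x = zr L" shows "x = zr L"
proof -
  have "x = sm L (s * s) x" using assms by simp
  also have "\<dots> = sm L s (sm L s x)" by (rule sm_mult[OF assms(2)])
  also have "\<dots> = sm L s (zr L)" by (simp only: assms(3))
  also have "\<dots> = zr L" by simp
  finally show ?thesis .
qed

lemma br_add_l: "x \<in> carr L \<Longrightarrow> y \<in> carr L \<Longrightarrow> z \<in> carr L \<Longrightarrow> br L (ad L x y) z = ad L (br L x z) (br L y z)"
  using bil1[of x y z 1] by simp
lemma br_add_r: "x \<in> carr L \<Longrightarrow> y \<in> carr L \<Longrightarrow> z \<in> carr L \<Longrightarrow> br L z (ad L x y) = ad L (br L z x) (br L z y)"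
  using bil2[of x y z 1] by simp

lemma br_0l[simp]: "z \<in> carr L \<Longrightarrow> br L (zr L) z = zr L"
  using br_add_l[of "zr L" "zr L" z] by (intro idem) auto
lemma br_0r[simp]: "z \<in> carr L \<Longrightarrow> br L z (zr L) = zr L"
  using br_add_r[of "zr L" "zr L" z] by (intro idem) auto

lemma br_sm_l: "x \<in> carr L \<Longrightarrow> z \<in> carr L \<Longrightarrow> br L (sm L c x) z = sm L c (br L x z)"
  using bil1[of x "zr L" z c] by simp
lemma br_sm_r: "x \<in> carr L \<Longrightarrow> z \<in> carr L \<Longrightarrow> br L z (sm L c x) = sm L c (br L z x)"
  using bil2[of x "zr L" z c] by simp

lemma add4: "a \<in> carr L \<Longrightarrow> b \<in> carr L \<Longrightarrow> c \<in> carr L \<Longrightarrow> d \<in> carr L \<Longrightarrow>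
  ad L (ad L a b) (ad L c d) = ad L (ad L a c) (ad L b d)"
proof -
  assume a: "a \<in> carr L" and b: "b \<in> carr L" and c: "c \<in> carr L" and d: "d \<in> carr L"
  have "ad L (ad L a b) (ad L c d) = ad L a (ad L b (ad L c d))" using a b c d by (simp add: assoc)
  also have "\<dots> = ad L a (ad L (ad L b c) d)" using a b c d by (simp add: assoc)
  also have "\<dots> = ad L a (ad L (ad L c b) d)" using b c by (simp add: comm[of b c])
  also have "\<dots> = ad L a (ad L c (ad L b d))" using a b c d by (simp add: assoc)
  also have "\<dots> = ad L (ad L a c) (ad L b d)" using a b c d by (simp add: assoc)
  finally show ?thesis .
qed

lemma Z_c: "i \<in> center L \<Longrightarrow> i \<in> carr L" by (simp add: center_def)
lemma Z_br: "i \<in> center L \<Longrightarrow> x \<in> carr L \<Longrightarrow> br L i x = zr L" by (simp add: center_def)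
lemma zr_Z[simp]: "zr L \<in> center L" by (simp add: center_def)
lemma Z_add: assumes "i \<in> center L" "j \<in> center L" shows "ad L i j \<in> center L"
  unfolding center_def using assms Z_c Z_br by (simp add: br_add_l)
lemma Z_sm: assumes "i \<in> center L" shows "sm L c i \<in> center L"
  unfolding center_def using assms Z_c Z_br by (simp add: br_sm_l)

lemma hom_E: "x \<in> evp L \<Longrightarrow> hom L x False" by (simp add: hom_def)
lemma hom_O: "x \<in> oddp L \<Longrightarrow> hom L x True" by (simp add: hom_def)

lemma Z_right_hom: assumes h: "hom L h d" and j: "j \<in> center L" shows "br L h j = zr L"
proof -
  have hc: "h \<in> carr L" using h by (rule hom_c)
  obtain je jo where je: "je \<in> evp L" and jo: "jo \<in> oddp L" and jj: "j = ad L je jo"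
    using decomp[OF Z_c[OF j]] by blast
  have jec: "je \<in> carr L" and joc: "jo \<in> carr L" using je jo by (auto intro: E_c O_c)
  define A where "A = br L je h"
  define B where "B = br L jo h"
  have hA: "hom L A (False \<noteq> d)" unfolding A_def by (rule hom_br[OF hom_E[OF je] h])
  have hB: "hom L B (True \<noteq> d)" unfolding B_def by (rule hom_br[OF hom_O[OF jo] h])
  have AB: "ad L A B = zr L"
  proof -
    have "ad L A B = br L j h" unfolding A_def B_def jj using jec joc hc by (simp add: br_add_l)
    also have "\<dots> = zr L" using j hc by (rule Z_br)
    finally show ?thesis .
  qed
  have A0: "A = zr L" and B0: "B = zr L"
  proof -
    have "A = zr L \<and> B = zr L"
    proof (cases d)
      case False
      then have "A \<in> evp L" "B \<in> oddp L" using hA hB by (simp_all add: hom_def)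
      then show ?thesis using parity AB by blast
    next
      case True
      then have Ao: "A \<in> oddp L" and Be: "B \<in> evp L" using hA hB by (simp_all add: hom_def)
      have "ad L B A = zr L" using AB comm[of A B] O_c[OF Ao] E_c[OF Be] by simp
      then show ?thesis using parity Ao Be by blast
    qed
    then show "A = zr L" "B = zr L" by simp_all
  qed
  have "br L h j = ad L (br L h je) (br L h jo)" unfolding jj using jec joc hc by (simp add: br_add_r)
  also have "\<dots> = ad L (sm L (- sgn2 d False) A) (sm L (- sgn2 d True) B)"
    unfolding A_def B_def using skew[OF h hom_E[OF je]] skew[OF h hom_O[OF jo]] by simp
  also have "\<dots> = zr L" using A0 B0 by simp
  finally show ?thesis .
qed

lemma Z_right: assumes g: "g \<in> carr L" and j: "j \<in> center L" shows "br L g j = zr L"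
proof -
  obtain ge go where ge: "ge \<in> evp L" and go: "go \<in> oddp L" and gg: "g = ad L ge go"
    using decomp[OF g] by blast
  have "br L g j = ad L (br L ge j) (br L go j)" unfolding gg
    using ge go j by (simp add: br_add_l E_c O_c Z_c)
  also have "\<dots> = zr L" using Z_right_hom[OF hom_E[OF ge] j] Z_right_hom[OF hom_O[OF go] j] by simp
  finally show ?thesis .
qed

abbreviation cs where "cs \<equiv> coset L (center L)"

lemma coset_self: "g \<in> carr L \<Longrightarrow> g \<in> cs g"
  unfolding coset_def by (rule CollectI, rule exI[of _ "zr L"]) simp

lemma coset_mem: "a \<in> cs g \<Longrightarrow> \<exists>i. i \<in> center L \<and> a = ad L g i"
  unfolding coset_def by blast

lemma coset_memI: "i \<in> center L \<Longrightarrow> a = ad L g i \<Longrightarrow> a \<in> cs g"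
  unfolding coset_def by blast

lemma quot_simps:
  "carr (quot L I) = coset L I ` carr L"
  "evp (quot L I) = coset L I ` evp L"
  "oddp (quot L I) = coset L I ` oddp L"
  "zr (quot L I) = I"
  "ad (quot L I) A B = {ad L a b | a b. a \<in> A \<and> b \<in> B}"
  "sm (quot L I) c A = {ad L (sm L c a) i | a i. a \<in> A \<and> i \<in> I}"
  "br (quot L I) A B = {ad L (br L a b) i | a b i. a \<in> A \<and> b \<in> B \<and> i \<in> I}"
  by (simp_all add: quot_def)

lemma quot_ad: assumes g: "g \<in> carr L" and h: "h \<in> carr L"
  shows "ad (quot L (center L)) (cs g) (cs h) = cs (ad L g h)"
proof (intro set_eqI iffI)
  fix x assume "x \<in> ad (quot L (center L)) (cs g) (cs h)"
  then obtain a b where x: "x = ad L a b" and a: "a \<in> cs g" and b: "b \<in> cs h" by (auto simp: quot_simps)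
  obtain i where i: "i \<in> center L" "a = ad L g i" using coset_mem[OF a] by blast
  obtain j where j: "j \<in> center L" "b = ad L h j" using coset_mem[OF b] by blast
  have "x = ad L (ad L g h) (ad L i j)" unfolding x i j using g h i j by (simp add: add4 Z_c)
  then show "x \<in> cs (ad L g h)" using Z_add[OF i(1) j(1)] by (intro coset_memI)
next
  fix x assume "x \<in> cs (ad L g h)"
  then obtain i where i: "i \<in> center L" "x = ad L (ad L g h) i" using coset_mem by blast
  have "x = ad L (ad L g i) (ad L h (zr L))" unfolding i(2) using add4[of g i h "zr L"] g h Z_c[OF i(1)] by simp
  moreover have "ad L g i \<in> cs g" using i(1) by (rule coset_memI) simp
  moreover have "ad L h (zr L) \<in> cs h" by (rule coset_memI) simp_all
  ultimately show "x \<in> ad (quot L (center L)) (cs g) (cs h)" by (auto simp: quot_simps)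
qed

lemma quot_sm: assumes g: "g \<in> carr L"
  shows "sm (quot L (center L)) c (cs g) = cs (sm L c g)"
proof (intro set_eqI iffI)
  fix x assume "x \<in> sm (quot L (center L)) c (cs g)"
  then obtain a i where x: "x = ad L (sm L c a) i" and a: "a \<in> cs g" and i: "i \<in> center L" by (auto simp: quot_simps)
  obtain j where j: "j \<in> center L" "a = ad L g j" using coset_mem[OF a] by blast
  have "x = ad L (ad L (sm L c g) (sm L c j)) i" unfolding x j using g j by (simp add: sm_add Z_c)
  also have "\<dots> = ad L (sm L c g) (ad L (sm L c j) i)" using g j i by (simp add: assoc Z_c)
  finally have "x = ad L (sm L c g) (ad L (sm L c j) i)" .
  then show "x \<in> cs (sm L c g)" using Z_add[OF Z_sm[OF j(1)] i] by (intro coset_memI)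
next
  fix x assume "x \<in> cs (sm L c g)"
  then obtain i where i: "i \<in> center L" "x = ad L (sm L c g) i" using coset_mem by blast
  then show "x \<in> sm (quot L (center L)) c (cs g)" using coset_self[OF g] by (auto simp: quot_simps)
qed

lemma quot_br: assumes g: "g \<in> carr L" and h: "h \<in> carr L"
  shows "br (quot L (center L)) (cs g) (cs h) = cs (br L g h)"
proof (intro set_eqI iffI)
  fix x assume "x \<in> br (quot L (center L)) (cs g) (cs h)"
  then obtain a b k where x: "x = ad L (br L a b) k" and a: "a \<in> cs g" and b: "b \<in> cs h" and k: "k \<in> center L"
    by (auto simp: quot_simps)
  obtain i where i: "i \<in> center L" "a = ad L g i" using coset_mem[OF a] by blast
  obtain j where j: "j \<in> center L" "b = ad L h j" using coset_mem[OF b] by blast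
  have ic: "i \<in> carr L" and jc: "j \<in> carr L" using i j Z_c by auto
  have "br L a b = ad L (br L g b) (br L i b)" unfolding i(2) using g ic j h by (simp add: br_add_l Z_c)
  also have "\<dots> = br L g b" using Z_br[OF i(1)] j h jc g by simp
  also have "\<dots> = ad L (br L g h) (br L g j)" unfolding j(2) using g h jc by (simp add: br_add_r)
  also have "\<dots> = br L g h" using Z_right[OF g j(1)] g h by simp
  finally have "x = ad L (br L g h) k" unfolding x by simp
  then show "x \<in> cs (br L g h)" using k by (intro coset_memI)
next
  fix x assume "x \<in> cs (br L g h)"
  then obtain i where i: "i \<in> center L" "x = ad L (br L g h) i" using coset_mem by blast
  then show "x \<in> br (quot L (center L)) (cs g) (cs h)" using coset_self[OF g] coset_self[OF h]
    by (auto simp: quot_simps)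
qed

lemma coset_0: assumes u: "u \<in> carr L" and e: "cs u = cs (zr L)" shows "u \<in> center L"
proof -
  have "u \<in> cs (zr L)" using coset_self[OF u] e by simp
  then obtain i where "i \<in> center L" "u = ad L (zr L) i" using coset_mem by blast
  then show ?thesis using Z_c by simp
qed

lemma coset_Z: assumes u: "u \<in> center L" shows "cs u = cs (zr L)"
proof (intro set_eqI iffI)
  have uc: "u \<in> carr L" using u Z_c by blast
  fix x assume "x \<in> cs u"
  then obtain i where i: "i \<in> center L" "x = ad L u i" using coset_mem by blast
  show "x \<in> cs (zr L)" using Z_add[OF u i(1)] i Z_c by (intro coset_memI[of "ad L u i"]) simp_all
next
  have uc: "u \<in> carr L" using u Z_c by blast
  fix x assume "x \<in> cs (zr L)"
  then obtain i where i: "i \<in> center L" "x = ad L (zr L) i" using coset_mem by blast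
  have ic: "i \<in> carr L" using i Z_c by blast
  have "x = ad L u (ad L (sm L (- 1) u) i)"
  proof -
    have "ad L u (ad L (sm L (- 1) u) i) = ad L (ad L u (sm L (- 1) u)) i" using uc ic by (simp add: assoc)
    also have "\<dots> = i" using uc ic by (simp add: neg)
    finally show ?thesis using i ic by simp
  qed
  then show "x \<in> cs u" using Z_add[OF Z_sm[OF u] i(1)] by (intro coset_memI)
qed

lemma not_capable:
  fixes f :: "'a set \<Rightarrow> (nat \<Rightarrow> 'f) \<times> (nat \<Rightarrow> 'f) \<times> 'f" and m :: nat
  assumes iso: "lsa_iso (quot L (center L)) (heis m) f" and m2: "m \<ge> 2"
  shows False
proof -
  let ?Q = "quot L (center L)"
  let ?H = "heis m :: ('f, (nat \<Rightarrow> 'f) \<times> (nat \<Rightarrow> 'f) \<times> 'f) lsa"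
  define \<psi> where "\<psi> g = f (cs g)" for g
  have isoc: "bij_betw f (carr ?Q) (carr ?H) \<and> f ` evp ?Q = evp ?H \<and> f ` oddp ?Q = oddp ?H \<and>
    (\<forall>x\<in>carr ?Q. \<forall>y\<in>carr ?Q. f (ad ?Q x y) = ad ?H (f x) (f y) \<and> f (br ?Q x y) = br ?H (f x) (f y)) \<and>
    (\<forall>c. \<forall>x\<in>carr ?Q. f (sm ?Q c x) = sm ?H c (f x))"
    using iso unfolding lsa_iso_def .
  note isoc' = isoc[THEN conjunct2, THEN conjunct2, THEN conjunct2]
  have bij: "bij_betw f (carr ?Q) (carr ?H)" using isoc by (rule conjunct1)
  have fE: "f ` evp ?Q = evp ?H" using isoc by (rule conjunct2[THEN conjunct1])
  have fO: "f ` oddp ?Q = oddp ?H" using isoc by (rule conjunct2[THEN conjunct2, THEN conjunct1])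
  have hom2: "\<forall>x\<in>carr ?Q. \<forall>y\<in>carr ?Q. f (ad ?Q x y) = ad ?H (f x) (f y) \<and> f (br ?Q x y) = br ?H (f x) (f y)"
    using isoc' by (rule conjunct1)
  have hom3: "\<forall>c. \<forall>x\<in>carr ?Q. f (sm ?Q c x) = sm ?H c (f x)" using isoc' by (rule conjunct2)
  have csQ: "g \<in> carr L \<Longrightarrow> cs g \<in> carr ?Q" for g by (simp add: quot_simps)
  have \<psi>_add: "\<psi> (ad L g h) = ad ?H (\<psi> g) (\<psi> h)" if "g \<in> carr L" "h \<in> carr L" for g h
    unfolding \<psi>_def using hom2 csQ that quot_ad[OF that, symmetric] by metis
  have \<psi>_br: "\<psi> (br L g h) = br ?H (\<psi> g) (\<psi> h)" if "g \<in> carr L" "h \<in> carr L" for g h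
    unfolding \<psi>_def using hom2 csQ that quot_br[OF that, symmetric] by metis
  have \<psi>_sm: "\<psi> (sm L c g) = sm ?H c (\<psi> g)" if "g \<in> carr L" for g c
    unfolding \<psi>_def using hom3 csQ that quot_sm[OF that, symmetric] by metis
  have \<psi>_inj: "cs g = cs h" if "g \<in> carr L" "h \<in> carr L" "\<psi> g = \<psi> h" for g h
    using bij csQ that unfolding \<psi>_def bij_betw_def inj_on_def by blast
  obtain a0 b0 c0 where p0: "\<psi> (zr L) = (a0, b0, c0)" by (cases "\<psi> (zr L)")
  have "\<psi> (zr L) = ad ?H (\<psi> (zr L)) (\<psi> (zr L))" using \<psi>_add[of "zr L" "zr L"] by simp
  then have A: "a0 = (\<lambda>j. a0 j + a0 j)" and B: "b0 = (\<lambda>j. b0 j + b0 j)" and C: "c0 = c0 + c0"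
    unfolding p0 heis_ad by simp_all
  have "a0 = (\<lambda>_. 0)"
  proof
    fix j show "a0 j = 0" using fun_cong[OF A, of j] by (rule dbl0)
  qed
  moreover have "b0 = (\<lambda>_. 0)"
  proof
    fix j show "b0 j = 0" using fun_cong[OF B, of j] by (rule dbl0)
  qed
  moreover have "c0 = 0" using C by (rule dbl0)
  ultimately
  have \<psi>0: "\<psi> (zr L) = ((\<lambda>_. 0), (\<lambda>_. 0), 0)" using p0 by simp
  have ker: "u \<in> center L" if "u \<in> carr L" "\<psi> u = ((\<lambda>_. 0), (\<lambda>_. 0), 0)" for u
    using coset_0[OF that(1) \<psi>_inj[OF that(1) zr_c]] that(2) \<psi>0 by simp
  have Zpsi: "\<psi> u = ((\<lambda>_. 0), (\<lambda>_. 0), 0)" if "u \<in> center L" for u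
    unfolding \<psi>_def coset_Z[OF that] using \<psi>0 unfolding \<psi>_def .
  have pre_E: "\<exists>x\<in>evp L. \<psi> x = v" if "v \<in> evp ?H" for v
  proof -
    have "v \<in> f ` evp ?Q" using that unfolding fE .
    then obtain A where A: "A \<in> evp ?Q" "v = f A" by (rule imageE)
    from A(1) obtain x where x: "x \<in> evp L" "A = cs x" unfolding quot_simps by (rule imageE)
    show ?thesis unfolding \<psi>_def using x A(2) by blast
  qed
  have pre_O: "\<exists>x\<in>oddp L. \<psi> x = v" if "v \<in> oddp ?H" for v
  proof -
    have "v \<in> f ` oddp ?Q" using that unfolding fO .
    then obtain A where A: "A \<in> oddp ?Q" "v = f A" by (rule imageE)
    from A(1) obtain x where x: "x \<in> oddp L" "A = cs x" unfolding quot_simps by (rule imageE)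
    show ?thesis unfolding \<psi>_def using x A(2) by blast
  qed
  have XE: "(dl k, (\<lambda>_. 0), 0) \<in> evp ?H" if "1 \<le> k" "k \<le> m" for k
    using that by (auto simp: heis_def dl_def)
  have YO: "((\<lambda>_. 0), dl k, 0) \<in> oddp ?H" if "1 \<le> k" "k \<le> m" for k
    using that by (auto simp: heis_def dl_def)
  obtain x1 where x1: "x1 \<in> evp L" "\<psi> x1 = (dl 1, (\<lambda>_. 0), 0)" using pre_E[OF XE, of 1] m2 by auto
  obtain x2 where x2: "x2 \<in> evp L" "\<psi> x2 = (dl 2, (\<lambda>_. 0), 0)" using pre_E[OF XE, of 2] m2 by auto
  obtain y1 where y1: "y1 \<in> oddp L" "\<psi> y1 = ((\<lambda>_. 0), dl 1, 0)" using pre_O[OF YO, of 1] m2 by auto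
  obtain y2 where y2: "y2 \<in> oddp L" "\<psi> y2 = ((\<lambda>_. 0), dl 2, 0)" using pre_O[OF YO, of 2] m2 by auto
  have x1c: "x1 \<in> carr L" and x2c: "x2 \<in> carr L" and y1c: "y1 \<in> carr L" and y2c: "y2 \<in> carr L"
    using x1 x2 y1 y2 by (auto intro: E_c O_c)
  have dd: "(\<Sum>j = 1..m. dl a j * dl b j) = (if a = b then (1::'f) else 0)" if "1 \<le> a" "a \<le> m" for a b
    using sumdelta that by blast
  define w1 where "w1 = br L x1 y1"
  define w2 where "w2 = br L x2 y2"
  have w1c: "w1 \<in> carr L" and w2c: "w2 \<in> carr L" unfolding w1_def w2_def using x1c x2c y1c y2c by simp_all
  have \<psi>w1: "\<psi> w1 = ((\<lambda>_. 0), (\<lambda>_. 0), 1)"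
    unfolding w1_def using \<psi>_br[OF x1c y1c] x1 y1 dd[of 1 1] m2 by (simp add: heis_br)
  have \<psi>w2: "\<psi> w2 = ((\<lambda>_. 0), (\<lambda>_. 0), 1)"
    unfolding w2_def using \<psi>_br[OF x2c y2c] x2 y2 dd[of 2 2] m2 by (simp add: heis_br)
  have dec: "\<exists>z\<in>center L. u = ad L (sm L c w2) z" if uc: "u \<in> carr L" and pu: "\<psi> u = ((\<lambda>_. 0), (\<lambda>_. 0), c)" for u c
  proof
    let ?z = "ad L u (sm L (- c) w2)"
    have "\<psi> ?z = ((\<lambda>_. 0), (\<lambda>_. 0), 0)"
      using \<psi>_add[OF uc sm_c[OF w2c]] \<psi>_sm[OF w2c] pu \<psi>w2 by (simp add: heis_ad heis_sm)
    then show "?z \<in> center L" using ker uc w2c by simp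
    have "ad L (sm L c w2) ?z = ad L u (ad L (sm L c w2) (sm L (- c) w2))"
    proof -
      have "ad L (sm L c w2) ?z = ad L (ad L (sm L c w2) u) (sm L (- c) w2)" using uc w2c by (simp add: assoc)
      also have "\<dots> = ad L (ad L u (sm L c w2)) (sm L (- c) w2)" using uc w2c by (simp add: comm[of u])
      also have "\<dots> = ad L u (ad L (sm L c w2) (sm L (- c) w2))" using uc w2c by (simp add: assoc)
      finally show ?thesis .
    qed
    also have "\<dots> = ad L u (sm L (c + - c) w2)" using sm_dist[OF w2c, of c "- c"] by (simp only:)
    also have "\<dots> = u" using uc w2c by simp
    finally show "u = ad L (sm L c w2) ?z" by simp
  qed
  have brz: "br L x u = zr L" if xc: "x \<in> carr L" and xw: "br L x w2 = zr L" and uc: "u \<in> carr L"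
    and pu: "\<psi> u = ((\<lambda>_. 0), (\<lambda>_. 0), c)" for x u c
  proof -
    obtain z where z: "z \<in> center L" "u = ad L (sm L c w2) z" using dec[OF uc pu] by blast
    have "br L x u = ad L (sm L c (br L x w2)) (br L x z)" unfolding z(2) using bil2 xc w2c Z_c[OF z(1)] by simp
    also have "\<dots> = zr L" using xw Z_right[OF xc z(1)] by simp
    finally show ?thesis .
  qed
  have brform: "\<exists>c. \<psi> (br L u v) = ((\<lambda>_. 0), (\<lambda>_. 0), c)" if "u \<in> carr L" "v \<in> carr L" for u v
    using \<psi>_br[OF that] heis_br_form by metis
  have centr: "br L u v \<in> center L" if "u \<in> carr L" "v \<in> carr L"
    "br ?H (\<psi> u) (\<psi> v) = ((\<lambda>_. 0), (\<lambda>_. 0), 0)" for u v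
    using ker[of "br L u v"] \<psi>_br[OF that(1,2)] that by simp
  have s1: "sgn2 False True = (1::'f)" "sgn2 False False = (1::'f)" "sgn2 True False = (1::'f)" "sgn2 True True = (- 1::'f)"
    by (simp_all add: sgn2_def)
  have hx1: "hom L x1 False" and hx2: "hom L x2 False" and hy1: "hom L y1 True" and hy2: "hom L y2 True"
    using x1 x2 y1 y2 by (simp_all add: hom_def)
  have c1: "br L y2 x1 \<in> center L" using centr[OF y2c x1c] y2 x1 dd[of 2 1] m2 by (simp add: heis_br sum_negf)
  have c2: "br L x1 x2 \<in> center L" using centr[OF x1c x2c] x2 x1 by (simp add: heis_br)
  have x1w2: "br L x1 w2 = zr L"
  proof -
    have "ad L (ad L (sm L (sgn2 False True) (br L x1 (br L x2 y2))) (sm L (sgn2 False False) (br L x2 (br L y2 x1))))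
        (sm L (sgn2 True False) (br L y2 (br L x1 x2))) = zr L" by (rule jac[OF hx1 hx2 hy2])
    then show ?thesis unfolding w2_def s1 using Z_right[OF x2c c1] Z_right[OF y2c c2] x1c x2c y2c by simp
  qed
  have c3: "br L y2 y1 \<in> center L" using centr[OF y2c y1c] y2 y1 by (simp add: heis_br)
  have c4: "br L y1 x2 \<in> center L" using centr[OF y1c x2c] y1 x2 dd[of 1 2] m2 by (simp add: heis_br sum_negf)
  have y1w2: "br L y1 w2 = zr L"
  proof -
    have "ad L (ad L (sm L (sgn2 True True) (br L y1 (br L x2 y2))) (sm L (sgn2 False True) (br L x2 (br L y2 y1))))
        (sm L (sgn2 True False) (br L y2 (br L y1 x2))) = zr L" by (rule jac[OF hy1 hx2 hy2])
    then have "sm L (- 1) (br L y1 w2) = zr L"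
      unfolding w2_def s1 using Z_right[OF x2c c3] Z_right[OF y2c c4] y1c x2c y2c by simp
    then show ?thesis by (rule sm_eq0[rotated 2]) (simp_all add: w2c y1c)
  qed
  have tw1: "br L t w1 = zr L" if ht: "hom L t d" for t d
  proof -
    have tc: "t \<in> carr L" using ht by (rule hom_c)
    obtain c where pc: "\<psi> (br L y1 t) = ((\<lambda>_. 0), (\<lambda>_. 0), c)" using brform[OF y1c tc] by blast
    obtain c' where pc': "\<psi> (br L t x1) = ((\<lambda>_. 0), (\<lambda>_. 0), c')" using brform[OF tc x1c] by blast
    have e1: "br L x1 (br L y1 t) = zr L" by (rule brz[OF x1c x1w2 _ pc]) (simp add: y1c tc)
    have e2: "br L y1 (br L t x1) = zr L" by (rule brz[OF y1c y1w2 _ pc']) (simp add: x1c tc)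
    have "ad L (ad L (sm L (sgn2 d True) (br L t (br L x1 y1))) (sm L (sgn2 False d) (br L x1 (br L y1 t))))
        (sm L (sgn2 True False) (br L y1 (br L t x1))) = zr L" by (rule jac[OF ht hx1 hy1])
    then have k: "sm L (sgn2 d True) (br L t w1) = zr L" unfolding w1_def e1 e2 using tc x1c y1c by simp
    have ss: "sgn2 d True * sgn2 d True = (1::'f)" by (simp add: sgn2_def)
    show ?thesis by (rule sm_eq0[OF ss _ k]) (simp add: tc w1c)
  qed
  have hw1: "hom L w1 True" unfolding w1_def using hom_br[OF hx1 hy1] by simp
  have "w1 \<in> center L"
    unfolding center_def
  proof (intro CollectI conjI ballI)
    show "w1 \<in> carr L" by (rule w1c)
    fix x assume xc: "x \<in> carr L"
    obtain xe xo where xe: "xe \<in> evp L" and xo: "xo \<in> oddp L" and xx: "x = ad L xe xo"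
      using decomp[OF xc] by blast
    have "br L w1 x = ad L (br L w1 xe) (br L w1 xo)" unfolding xx using w1c xe xo by (simp add: br_add_r E_c O_c)
    also have "\<dots> = ad L (sm L (- sgn2 True False) (br L xe w1)) (sm L (- sgn2 True True) (br L xo w1))"
      using skew[OF hw1 hom_E[OF xe]] skew[OF hw1 hom_O[OF xo]] by simp
    also have "\<dots> = zr L" using tw1[OF hom_E[OF xe]] tw1[OF hom_O[OF xo]] by simp
    finally show "br L w1 x = zr L" .
  qed
  then have "\<psi> w1 = ((\<lambda>_. 0), (\<lambda>_. 0), 0)" by (rule Zpsi)
  then show False using \<psi>w1 by simp
qed

end



definition H1 :: "('f::field, nat \<Rightarrow> 'f) lsa" where
  "H1 = \<lparr> carr = {g. \<forall>n\<ge>4. g n = 0},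
          evp = {g. \<forall>n. n \<noteq> 0 \<longrightarrow> g n = 0},
          oddp = {g. g 0 = 0 \<and> (\<forall>n\<ge>4. g n = 0)},
          zr = (\<lambda>_. 0),
          ad = (\<lambda>g h n. g n + h n),
          sm = (\<lambda>c g n. c * g n),
          br = (\<lambda>g h n. if n = 2 then g 0 * h 1 - g 1 * h 0
                        else if n = 3 then g 0 * h 2 - g 2 * h 0 else 0) \<rparr>"

lemma H1_simps:
  "carr H1 = {g. \<forall>n\<ge>4. g n = 0}"
  "evp H1 = {g. \<forall>n. n \<noteq> 0 \<longrightarrow> g n = 0}"
  "oddp H1 = {g. g 0 = 0 \<and> (\<forall>n\<ge>4. g n = 0)}"
  "zr H1 = (\<lambda>_. 0)"
  "ad H1 = (\<lambda>g h n. g n + h n)"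
  "sm H1 = (\<lambda>c g n. c * g n)"
  "br H1 = (\<lambda>g h n. if n = 2 then g 0 * h 1 - g 1 * h 0
                        else if n = 3 then g 0 * h 2 - g 2 * h 0 else 0)"
  by (simp_all add: H1_def)

lemma H1_vs: "vector_space_on (H1 :: ('f::field, _) lsa)"
  unfolding vector_space_on_def H1_simps
  apply (intro conjI)
  apply (auto simp: algebra_simps fun_eq_iff)
  apply (rule_tac x="\<lambda>n. - x n" in exI)
  apply auto
  done

lemma H1_lsa: "lie_superalgebra (H1 :: ('f::field, _) lsa)"
  unfolding lie_superalgebra_def
proof (intro conjI)
  show "vector_space_on (H1 :: ('f::field, _) lsa)" by (rule H1_vs)
  show "subspace_of (evp H1) (H1 :: ('f::field, _) lsa)"
    unfolding subspace_of_def H1_simps by auto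
  show "subspace_of (oddp H1) (H1 :: ('f::field, _) lsa)"
    unfolding subspace_of_def H1_simps by auto
  show "carr (H1 :: ('f::field, _) lsa) = {ad H1 a b |a b. a \<in> evp H1 \<and> b \<in> oddp H1}"
    unfolding H1_simps
  proof (intro set_eqI iffI)
    fix g :: "nat \<Rightarrow> 'f" assume "g \<in> {g. \<forall>n\<ge>4. g n = 0}"
    then show "g \<in> {(\<lambda>n. a n + b n) |a b. a \<in> {g. \<forall>n. n \<noteq> 0 \<longrightarrow> g n = 0} \<and> b \<in> {g. g 0 = 0 \<and> (\<forall>n\<ge>4. g n = 0)}}"
      apply simp
      apply (rule_tac x="\<lambda>n. if n = 0 then g 0 else 0" in exI)
      apply (rule_tac x="\<lambda>n. if n = 0 then 0 else g n" in exI)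
      apply (auto simp: fun_eq_iff)
      done
  qed auto
  show "evp H1 \<inter> oddp H1 = {zr (H1 :: ('f::field, _) lsa)}"
    unfolding H1_simps by (auto simp: fun_eq_iff) (metis neq0_conv)
  show "\<forall>x\<in>carr H1. \<forall>y\<in>carr H1. br H1 x y \<in> carr (H1 :: ('f::field, _) lsa)"
    unfolding H1_simps by auto
  show "\<forall>c. \<forall>x\<in>carr H1. \<forall>y\<in>carr H1. \<forall>z\<in>carr H1.
        br H1 (ad H1 (sm H1 c x) y) z = ad H1 (sm H1 c (br H1 x z)) (br H1 y z) \<and>
        br H1 z (ad H1 (sm H1 c x) y) = ad H1 (sm H1 c (br H1 z x)) (br (H1 :: ('f::field, _) lsa) z y)"
    unfolding H1_simps by (auto simp: fun_eq_iff algebra_simps)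
  show "\<forall>x y d e. hom H1 x d \<longrightarrow> hom H1 y e \<longrightarrow> hom (H1 :: ('f::field, _) lsa) (br H1 x y) (d \<noteq> e)"
    unfolding hom_def H1_simps by auto
  show "\<forall>x y d e. hom H1 x d \<longrightarrow> hom H1 y e \<longrightarrow>
        br H1 x y = sm H1 (- sgn2 d e) (br (H1 :: ('f::field, _) lsa) y x)"
    unfolding hom_def H1_simps sgn2_def by (auto simp: fun_eq_iff algebra_simps)
  show "\<forall>x y z d e f. hom H1 x d \<longrightarrow> hom H1 y e \<longrightarrow> hom H1 z f \<longrightarrow>
        ad H1 (ad H1 (sm H1 (sgn2 d f) (br H1 x (br H1 y z)))
                   (sm H1 (sgn2 e d) (br H1 y (br H1 z x))))
             (sm H1 (sgn2 f e) (br H1 z (br H1 x y))) = zr (H1 :: ('f::field, _) lsa)"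
    unfolding hom_def H1_simps sgn2_def by (auto simp: fun_eq_iff algebra_simps)
qed

lemma center_H1: "center (H1 :: ('f::field, _) lsa) = {g. \<forall>n. n \<noteq> 3 \<longrightarrow> g n = 0}"
proof (intro set_eqI iffI)
  fix g :: "nat \<Rightarrow> 'f" assume g: "g \<in> center H1"
  then have gc: "\<forall>n\<ge>4. g n = 0" and b: "\<And>h. \<forall>n\<ge>4. h n = (0::'f) \<Longrightarrow> br H1 g h = (\<lambda>_. 0)"
    unfolding center_def H1_simps by auto
  have e0: "br H1 g (\<lambda>n. if n = 0 then 1 else 0) = (\<lambda>_. 0)" by (rule b) auto
  have "br H1 g (\<lambda>n. if n = 0 then 1 else 0) 2 = 0" "br H1 g (\<lambda>n. if n = 0 then 1 else 0) 3 = 0"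
    by (simp_all only: e0)
  then have 1: "g 1 = 0" "g 2 = 0" unfolding H1_simps by simp_all
  have e1: "br H1 g (\<lambda>n. if n = 1 then 1 else 0) = (\<lambda>_. 0)" by (rule b) auto
  have "br H1 g (\<lambda>n. if n = 1 then 1 else 0) 2 = 0" by (simp only: e1)
  then have 2: "g 0 = 0" unfolding H1_simps by simp
  show "g \<in> {g. \<forall>n. n \<noteq> 3 \<longrightarrow> g n = 0}"
  proof (intro CollectI allI impI)
    fix n :: nat assume "n \<noteq> 3"
    then consider "n = 0" | "n = 1" | "n = 2" | "n \<ge> 4" by linarith
    then show "g n = 0" using 1 2 gc by cases auto
  qed
next
  fix g :: "nat \<Rightarrow> 'f" assume "g \<in> {g. \<forall>n. n \<noteq> 3 \<longrightarrow> g n = 0}"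
  then show "g \<in> center H1" unfolding center_def H1_simps by (auto simp: fun_eq_iff)
qed

definition phi :: "(nat \<Rightarrow> 'f::field) \<Rightarrow> (nat \<Rightarrow> 'f) \<times> (nat \<Rightarrow> 'f) \<times> 'f" where
  "phi g = ((\<lambda>j. if j = 1 then g 0 else 0), (\<lambda>j. if j = 1 then g 1 else 0), g 2)"

definition fH :: "(nat \<Rightarrow> 'f::field) set \<Rightarrow> (nat \<Rightarrow> 'f) \<times> (nat \<Rightarrow> 'f) \<times> 'f" where
  "fH A = phi (SOME g. g \<in> A)"

lemma fH_const: "S \<noteq> {} \<Longrightarrow> (\<And>a. a \<in> S \<Longrightarrow> phi a = v) \<Longrightarrow> fH S = v"
  unfolding fH_def by (metis (mono_tags) some_in_eq)

lemma coset_H1: "coset H1 (center H1) g = {a. \<forall>n. n \<noteq> 3 \<longrightarrow> a n = (g n :: 'f::field)}"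
proof (intro set_eqI iffI)
  fix a assume "a \<in> coset H1 (center H1) g"
  then show "a \<in> {a. \<forall>n. n \<noteq> 3 \<longrightarrow> a n = g n}"
    unfolding coset_def center_H1 H1_simps by auto
next
  fix a assume "a \<in> {a. \<forall>n. n \<noteq> 3 \<longrightarrow> a n = g n}"
  then show "a \<in> coset H1 (center H1) g"
    unfolding coset_def center_H1 H1_simps
    by (auto intro!: exI[of _ "\<lambda>n. a n - g n"] simp: fun_eq_iff)
qed

lemma phi_coset: "a \<in> coset H1 (center H1) g \<Longrightarrow> phi a = phi (g::nat\<Rightarrow>'f::field)"
  unfolding coset_H1 phi_def by auto

lemma g_coset: "g \<in> coset H1 (center H1) (g::nat\<Rightarrow>'f::field)"
  unfolding coset_H1 by auto

lemma fH_coset: "fH (coset H1 (center H1) g) = phi (g::nat\<Rightarrow>'f::field)"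
  by (rule fH_const) (use g_coset phi_coset in auto)

lemma ne2: "a \<in> A \<Longrightarrow> i \<in> I \<Longrightarrow> {F a i | a i. a \<in> A \<and> i \<in> I} \<noteq> {}" by blast
lemma ne3: "a \<in> A \<Longrightarrow> b \<in> B \<Longrightarrow> i \<in> I \<Longrightarrow> {F a b i | a b i. a \<in> A \<and> b \<in> B \<and> i \<in> I} \<noteq> {}" by blast
lemma zc: "(\<lambda>_. 0) \<in> center (H1 :: ('f::field, _) lsa)" by (simp add: center_H1)
lemma phi_eq: assumes "\<And>n. n \<noteq> 3 \<Longrightarrow> p n = q n" shows "phi p = phi q"
proof -
  have "p 0 = q 0" "p 1 = q 1" "p 2 = q 2" by (rule assms; simp)+
  then show ?thesis unfolding phi_def by (simp only:)
qed

lemma heis1_carr: "((a,b,c) \<in> carr (heis 1 :: ('f::field, _) lsa)) = (\<forall>j. j \<noteq> 1 \<longrightarrow> a j = 0 \<and> b j = 0)"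
  unfolding heis_def by (auto simp: linorder_neq_iff)
lemma heis1_evp: "((a,b,c) \<in> evp (heis 1 :: ('f::field, _) lsa)) = ((\<forall>j. j \<noteq> 1 \<longrightarrow> a j = 0) \<and> b = (\<lambda>_. 0) \<and> c = 0)"
  unfolding heis_def by (auto simp: linorder_neq_iff fun_eq_iff)
lemma heis1_oddp: "((a,b,c) \<in> oddp (heis 1 :: ('f::field, _) lsa)) = ((\<forall>j. j \<noteq> 1 \<longrightarrow> b j = 0) \<and> a = (\<lambda>_. 0))"
  unfolding heis_def by (auto simp: linorder_neq_iff fun_eq_iff)

lemma br_cong: assumes "p 0 = g 0" "p 1 = g 1" "p 2 = g 2" "q 0 = h 0" "q 1 = h 1" "q 2 = h 2"
  shows "br H1 p q = br (H1 :: ('f::field, _) lsa) g h"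
  unfolding H1_simps by (simp only: assms)

lemma fH_sm: assumes "A \<in> carr (quot H1 (center H1 :: (nat \<Rightarrow> 'f::field) set))"
  shows "fH (sm (quot H1 (center H1)) c A) = sm (heis 1 :: ('f::field, _) lsa) c (fH A)"
proof -
  let ?C = "coset H1 (center H1) :: (nat \<Rightarrow> 'f) \<Rightarrow> _"
  from assms obtain g where A: "A = ?C g" unfolding quot_def by auto
    have "fH (sm (quot H1 (center H1)) c A) = phi (\<lambda>n. c * g n)"
    proof (rule fH_const)
      show "sm (quot H1 (center H1)) c A \<noteq> {}"
        unfolding quot_def A by simp (use g_coset zc in blast)
      fix a assume "a \<in> sm (quot H1 (center H1)) c A"
      then obtain a' i where "a = ad H1 (sm H1 c a') i" "a' \<in> ?C g" "i \<in> center H1"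
        unfolding quot_def A by auto
      then show "phi a = phi (\<lambda>n. c * g n)"
        unfolding coset_H1 unfolding center_H1 H1_simps by (intro phi_eq) auto
    qed
    then show ?thesis
      unfolding A fH_coset by (simp add: heis_def phi_def fun_eq_iff)
qed

lemma fH_ad: assumes "A \<in> carr (quot H1 (center H1 :: (nat \<Rightarrow> 'f::field) set))"
  "B \<in> carr (quot H1 (center H1 :: (nat \<Rightarrow> 'f::field) set))"
  shows "fH (ad (quot H1 (center H1)) A B) = ad (heis 1 :: ('f::field, _) lsa) (fH A) (fH B)"
proof -
  let ?C = "coset H1 (center H1) :: (nat \<Rightarrow> 'f) \<Rightarrow> _"
  from assms obtain g h where A: "A = ?C g" and B: "B = ?C h" unfolding quot_def by auto
  have "fH (ad (quot H1 (center H1)) A B) = phi (\<lambda>n. g n + h n)"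
  proof (rule fH_const)
    show "ad (quot H1 (center H1)) A B \<noteq> {}"
      unfolding quot_def A B by simp (use g_coset in blast)
    fix a assume "a \<in> ad (quot H1 (center H1)) A B"
    then obtain a' b' where "a = ad H1 a' b'" "a' \<in> ?C g" "b' \<in> ?C h"
      unfolding quot_def A B by auto
    then show "phi a = phi (\<lambda>n. g n + h n)"
      unfolding coset_H1 H1_simps by (intro phi_eq) auto
  qed
  then show ?thesis
    unfolding A B fH_coset by (simp add: heis_def phi_def fun_eq_iff)
qed

lemma fH_br: assumes "A \<in> carr (quot H1 (center H1 :: (nat \<Rightarrow> 'f::field) set))"
  "B \<in> carr (quot H1 (center H1 :: (nat \<Rightarrow> 'f::field) set))"
  shows "fH (br (quot H1 (center H1)) A B) = br (heis 1 :: ('f::field, _) lsa) (fH A) (fH B)"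
proof -
  let ?C = "coset H1 (center H1) :: (nat \<Rightarrow> 'f) \<Rightarrow> _"
  from assms obtain g h where A: "A = ?C g" and B: "B = ?C h" unfolding quot_def by auto
  have "fH (br (quot H1 (center H1)) A B) = phi (br H1 g h)"
  proof (rule fH_const)
    show "br (quot H1 (center H1)) A B \<noteq> {}"
      unfolding quot_def A B by simp (use g_coset zc in blast)
    fix a assume "a \<in> br (quot H1 (center H1)) A B"
    then obtain a' b' i where "a = ad H1 (br H1 a' b') i" "a' \<in> ?C g" "b' \<in> ?C h" "i \<in> center H1"
      unfolding quot_def A B by auto
    then have a: "a = ad H1 (br H1 a' b') i" and "\<forall>n. n \<noteq> 3 \<longrightarrow> a' n = g n" "\<forall>n. n \<noteq> 3 \<longrightarrow> b' n = h n"
      and i: "\<forall>n. n \<noteq> 3 \<longrightarrow> i n = 0"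
      unfolding coset_H1 unfolding center_H1 by auto
    then have "br H1 a' b' = br H1 g h" by (intro br_cong) auto
    then show "phi a = phi (br H1 g h)"
      unfolding a using i by (intro phi_eq) (simp add: H1_simps)
  qed
  also have "phi (br H1 g h) = br (heis 1 :: ('f::field, _) lsa) (phi g) (phi h)"
    by (simp add: heis_def phi_def H1_simps)
  finally show ?thesis
    unfolding A B fH_coset .
qed

lemma phi_carr: "phi g \<in> carr (heis 1 :: ('f::field, _) lsa)"
  unfolding phi_def heis_def by auto
lemma phi_evp: "g \<in> evp H1 \<Longrightarrow> phi g \<in> evp (heis 1 :: ('f::field, _) lsa)"
  unfolding phi_def heis_def H1_simps by auto
lemma phi_oddp: "g \<in> oddp H1 \<Longrightarrow> phi g \<in> oddp (heis 1 :: ('f::field, _) lsa)"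
  unfolding phi_def heis_def H1_simps by auto
lemma phi_inj: assumes "phi g = phi (h :: nat \<Rightarrow> 'f::field)" shows "g 0 = h 0" "g 1 = h 1" "g 2 = h 2"
proof -
  have 1: "(\<lambda>j. if j = (1::nat) then g 0 else 0) = (\<lambda>j. if j = 1 then h 0 else 0)"
    and 2: "(\<lambda>j. if j = (1::nat) then g 1 else 0) = (\<lambda>j. if j = 1 then h 1 else 0)"
    and 3: "g 2 = h 2" using assms unfolding phi_def by simp_all
  from fun_cong[OF 1, of 1] show "g 0 = h 0" by simp
  from fun_cong[OF 2, of 1] show "g 1 = h 1" by simp
  from 3 show "g 2 = h 2" .
qed

lemma quot_carrE: "A \<in> carr (quot H1 (center H1)) \<Longrightarrow> (\<And>g. A = coset H1 (center H1) g \<Longrightarrow> g \<in> carr H1 \<Longrightarrow> P) \<Longrightarrow> P"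
  unfolding quot_def by auto
lemma quot_evpE: "A \<in> evp (quot H1 (center H1)) \<Longrightarrow> (\<And>g. A = coset H1 (center H1) g \<Longrightarrow> g \<in> evp H1 \<Longrightarrow> P) \<Longrightarrow> P"
  unfolding quot_def by auto
lemma quot_oddpE: "A \<in> oddp (quot H1 (center H1)) \<Longrightarrow> (\<And>g. A = coset H1 (center H1) g \<Longrightarrow> g \<in> oddp H1 \<Longrightarrow> P) \<Longrightarrow> P"
  unfolding quot_def by auto

lemma H1_iso: "lsa_iso (quot H1 (center H1)) (heis 1 :: ('f::field, _) lsa) fH"
proof -
  let ?C = "coset H1 (center H1) :: (nat \<Rightarrow> 'f) \<Rightarrow> _"
  have b1: "bij_betw fH (carr (quot H1 (center H1))) (carr (heis 1 :: ('f::field, _) lsa))"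
    unfolding bij_betw_def
  proof
    show "inj_on fH (carr (quot H1 (center H1 :: (nat \<Rightarrow> 'f) set)))"
    proof (rule inj_onI)
      fix A B assume A0: "A \<in> carr (quot H1 (center H1 :: (nat \<Rightarrow> 'f) set))"
        and B0: "B \<in> carr (quot H1 (center H1 :: (nat \<Rightarrow> 'f) set))" and e0: "fH A = fH B"
      obtain g where A: "A = ?C g" and gc: "g \<in> carr H1" using A0 by (rule quot_carrE)
      obtain h where B: "B = ?C h" and hc: "h \<in> carr H1" using B0 by (rule quot_carrE)
      have e: "phi g = phi h" using e0 unfolding A B fH_coset .
      have gc': "\<forall>n\<ge>4. g n = 0" and hc': "\<forall>n\<ge>4. h n = 0" using gc hc unfolding H1_simps by auto
      have "\<forall>n. n \<noteq> 3 \<longrightarrow> g n = h n"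
      proof (intro allI impI)
        fix n :: nat assume "n \<noteq> 3"
        then consider "n = 0" | "n = 1" | "n = 2" | "n \<ge> 4" by linarith
        then show "g n = h n" using gc' hc' phi_inj[OF e] by cases auto
      qed
      then show "A = B" unfolding A B coset_H1 by auto
    qed
    show "fH ` carr (quot H1 (center H1)) = carr (heis 1 :: ('f::field, _) lsa)"
    proof (intro set_eqI iffI)
      fix v assume "v \<in> fH ` carr (quot H1 (center H1 :: (nat \<Rightarrow> 'f) set))"
      then obtain A where A0: "A \<in> carr (quot H1 (center H1 :: (nat \<Rightarrow> 'f) set))" and v: "v = fH A" by blast
      obtain g where A: "A = ?C g" using A0 by (rule quot_carrE)
      show "v \<in> carr (heis 1 :: ('f::field, _) lsa)" unfolding v A fH_coset by (rule phi_carr)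
    next
      fix v assume "v \<in> carr (heis 1 :: ('f::field, _) lsa)"
      obtain a b c where v: "v = (a, b, c)" by (cases v)
      from \<open>v \<in> _\<close> have "(a,b,c) \<in> carr (heis 1 :: ('f::field, _) lsa)" unfolding v .
      then have ab: "\<forall>j. j \<noteq> 1 \<longrightarrow> a j = 0 \<and> b j = 0" by (simp only: heis1_carr)
      let ?g = "\<lambda>n. if n = 0 then a 1 else if n = 1 then b 1 else if n = 2 then c else 0"
      have "fH (?C ?g) = v" unfolding fH_coset phi_def v using ab by (auto simp: fun_eq_iff)
      moreover have "?C ?g \<in> carr (quot H1 (center H1))" unfolding quot_def H1_simps by auto
      ultimately show "v \<in> fH ` carr (quot H1 (center H1 :: (nat \<Rightarrow> 'f) set))" by (rule image_eqI[OF sym])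
    qed
  qed
  have b2: "fH ` evp (quot H1 (center H1)) = evp (heis 1 :: ('f::field, _) lsa)"
  proof (intro set_eqI iffI)
    fix v assume "v \<in> fH ` evp (quot H1 (center H1 :: (nat \<Rightarrow> 'f) set))"
    then obtain A where A0: "A \<in> evp (quot H1 (center H1 :: (nat \<Rightarrow> 'f) set))" and v: "v = fH A" by blast
    obtain g where A: "A = ?C g" and gp: "g \<in> evp H1" using A0 by (rule quot_evpE)
    from gp show "v \<in> evp (heis 1 :: ('f::field, _) lsa)" unfolding v A fH_coset by (rule phi_evp)
  next
    fix v assume "v \<in> evp (heis 1 :: ('f::field, _) lsa)"
    obtain a b c where v0: "v = (a, b, c)" by (cases v)
    from \<open>v \<in> _\<close> have "(a,b,c) \<in> evp (heis 1 :: ('f::field, _) lsa)" unfolding v0 .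
    then have ab: "\<forall>j. j \<noteq> 1 \<longrightarrow> a j = 0" and "b = (\<lambda>_. 0)" "c = 0" unfolding heis1_evp by blast+
    then have v: "v = (a, \<lambda>_. 0, 0)" using v0 by simp
    let ?g = "\<lambda>n. if n = 0 then a 1 else 0"
    have "fH (?C ?g) = v" unfolding fH_coset phi_def v using ab by (auto simp: fun_eq_iff)
    moreover have "?C ?g \<in> evp (quot H1 (center H1))" unfolding quot_def H1_simps by auto
    ultimately show "v \<in> fH ` evp (quot H1 (center H1 :: (nat \<Rightarrow> 'f) set))" by (rule image_eqI[OF sym])
  qed
  have b3: "fH ` oddp (quot H1 (center H1)) = oddp (heis 1 :: ('f::field, _) lsa)"
  proof (intro set_eqI iffI)
    fix v assume "v \<in> fH ` oddp (quot H1 (center H1 :: (nat \<Rightarrow> 'f) set))"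
    then obtain A where A0: "A \<in> oddp (quot H1 (center H1 :: (nat \<Rightarrow> 'f) set))" and v: "v = fH A" by blast
    obtain g where A: "A = ?C g" and gp: "g \<in> oddp H1" using A0 by (rule quot_oddpE)
    from gp show "v \<in> oddp (heis 1 :: ('f::field, _) lsa)" unfolding v A fH_coset by (rule phi_oddp)
  next
    fix v assume "v \<in> oddp (heis 1 :: ('f::field, _) lsa)"
    obtain a b c where v0: "v = (a, b, c)" by (cases v)
    from \<open>v \<in> _\<close> have "(a,b,c) \<in> oddp (heis 1 :: ('f::field, _) lsa)" unfolding v0 .
    then have ab: "\<forall>j. j \<noteq> 1 \<longrightarrow> b j = 0" and "a = (\<lambda>_. 0)" unfolding heis1_oddp by blast+
    then have v: "v = (\<lambda>_. 0, b, c)" using v0 by simp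
    let ?g = "\<lambda>n. if n = 1 then b 1 else if n = 2 then c else 0"
    have "fH (?C ?g) = v" unfolding fH_coset phi_def v using ab by (auto simp: fun_eq_iff)
    moreover have "?C ?g \<in> oddp (quot H1 (center H1))" unfolding quot_def H1_simps by auto
    ultimately show "v \<in> fH ` oddp (quot H1 (center H1 :: (nat \<Rightarrow> 'f) set))" by (rule image_eqI[OF sym])
  qed
  show ?thesis unfolding lsa_iso_def using b1 b2 b3 by (simp add: fH_ad fH_br fH_sm)
qed

lemma dir2: "capable_in TYPE(nat \<Rightarrow> 'f) (heis 1 :: ('f::field, _) lsa)"
  unfolding capable_in_def using H1_lsa H1_iso by blast


theorem mainTheorem5:
  fixes m :: nat
  assumes "(2::'f::field) \<noteq> 0" and "(3::'f) \<noteq> 0" and "m \<ge> 1"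
  shows "(capable_in TYPE('h) (heis m :: ('f, _) lsa) \<longrightarrow> m = 1) \<and>
         (m = 1 \<longrightarrow> capable_in TYPE(nat \<Rightarrow> 'f) (heis m :: ('f, _) lsa))"
proof (intro conjI impI)
  assume "capable_in TYPE('h) (heis m :: ('f, _) lsa)"
  then obtain H :: "('f, 'h) lsa" and f where H: "lie_superalgebra H"
    and iso: "lsa_iso (quot H (center H)) (heis m) f"
    unfolding capable_in_def by blast
  show "m = 1"
  proof (rule ccontr)
    assume "m \<noteq> 1"
    then have "m \<ge> 2" using assms(3) by linarith
    then show False using LS.not_capable[OF LS.intro[OF H] iso] by blast
  qed
next
  assume "m = 1"
  then show "capable_in TYPE(nat \<Rightarrow> 'f) (heis m :: ('f, _) lsa)" using dir2 by simp
qed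

end
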